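(* In the setting of the context, let $\theta^*>0$ be the optimal throughput and define $$J_{\theta^*}(x,0)=(1-\tau)\int_{(\theta^*,\infty)}(y-\theta^* )\,G(dy\mid x)-\theta^*\tau,\qquad q(x)=J_{\theta^*}(x,0)-x+\theta^*,\qquad x\ge 0.$$ Then: (i) $J_{\theta^*}(x,0)$ is monotonically increasing in $x$ with $\lim_{x\to\infty}J_{\theta^*}(x,0)=\infty$, and $\lim_{x\to 0}J_{\theta^*}(x,0)<0$ when $\frac{R_e}{\theta^*}e^{-\theta^*/R_e}<\frac{\tau}{1-\tau}$. (ii) If $c_r<\frac{1}{1-\tau}$, then $q(x)$ is monotonically decreasing in $x$, $\lim_{x\to0}q(x)>0$ and $\lim_{x\to\infty}q(x)=-\infty$.
   Context: Setting (distributed opportunistic scheduling with two-level probing). Fix $p_s\in(0,1)$, $\tau\in(0,1)$, and normalize the data transmission duration to $1$. Let $K_1,K_2,\dots$ be i.i.d. geometric on $\{1,2,\dots\}$ with parameter $p_s$. Let $(R_n^{(1)},R_n^{(2)})$, $n\ge1$, be i.i.d. pairs independent of $(K_j)$, with $R_n^{(1)}$ exponential with mean $E[R^{(1)}]>0$, and conditionally on $R_n^{(1)}=x$, $R_n^{(2)}$ distributed as $|\sqrt{c_rx}+z|^2$ with constants $c_r>0$, $R_e>0$ and $z$ circularly symmetric complex Gaussian with $E|z|^2=R_e$; $G(y\mid x)$ denotes this conditional cdf. A policy: in round $n$ (reached after contention time $\sum_{j\le n}K_j\tau$) the link observes $R_n^{(1)}$ and either transmits at rate $R_n^{(1)}$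 for duration $1$, or skips to round $n+1$, or performs second-level probing (time cost $\tau$), observes $R_n^{(2)}$, and then either transmits at rate $R_n^{(2)}$ for duration $1-\tau$ or skips to round $n+1$. With $N$ the round of transmission, $R_N$ the rate used, $T_{d,N}\in\{1,1-\tau\}$ the transmission duration and $T_N$ the total elapsed time (contention times, second-level probing times, and the final transmission period of total length 1), the optimal throughput is $\theta^*=\sup_N E[R_NT_{d,N}]/E[T_N]$ over stopping rules with $N\ge1$, $E[T_N]<\infty$. *)

theory Defs
  imports "HOL-Probability.Probability"
begin

text \<open>Circularly symmetric complex Gaussian z with E|z|^2 = Rn (the paper R_e): density
  exp(-|z|^2/Rn)/(pi Rn) with respect to Lebesgue measure on the complex plane.\<close>
definition cscg :: "real \<Rightarrow> complex measure" where
  "cscg Rn = density lborel (\<lambda>z. ennreal (exp (- (cmod z)\<^sup>2 / Rn) / (pi * Rn)))"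

text \<open>G(. | x): the conditional law of R2 given R1 = x, i.e. the law of |sqrt(c_r x) + z|^2.\<close>
definition G_law :: "real \<Rightarrow> real \<Rightarrow> real \<Rightarrow> real measure" where
  "G_law cr Rn x = distr (cscg Rn) borel (\<lambda>z. (cmod (complex_of_real (sqrt (cr * x)) + z))\<^sup>2)"

definition J0 :: "real \<Rightarrow> real \<Rightarrow> real \<Rightarrow> real \<Rightarrow> real \<Rightarrow> real" where
  "J0 tau cr Rn \<theta> x = (1 - tau) * (LINT y:{\<theta><..}|G_law cr Rn x. (y - \<theta>)) - \<theta> * tau"

definition q_fun :: "real \<Rightarrow> real \<Rightarrow> real \<Rightarrow> real \<Rightarrow> real \<Rightarrow> real" where
  "q_fun tau cr Rn \<theta> x = J0 tau cr Rn \<theta> x - x + \<theta>"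

end

theory Submission
  imports Defs "HOL-Real_Asymp.Real_Asymp"
begin



lemma lborel_cnj_affine:
  fixes t :: complex
  shows "distr lborel borel (\<lambda>w. t - cnj w) = (lborel :: complex measure)"
proof -
  define c :: "complex \<Rightarrow> real" where "c = (\<lambda>j. if j = 1 then -1 else 1)"
  have cj: "\<And>j. j \<in> Basis \<Longrightarrow> c j \<noteq> 0" by (simp add: c_def)
  have T: "(\<lambda>x. t + (\<Sum>j\<in>Basis. (c j * (x \<bullet> j)) *\<^sub>R j)) = (\<lambda>w. t - cnj w)"
    by (rule ext) (simp add: Basis_complex_def c_def complex_eq_iff inner_complex_def)
  have "(\<Prod>j\<in>(Basis::complex set). \<bar>c j\<bar>) = 1"
    by (simp add: Basis_complex_def c_def)
  then show ?thesis
    using lborel_affine_euclidean[where c=c and t=t, OF cj] T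
    by (simp add: density_1)
qed

lemma lborel_uminus_complex:
  "distr lborel borel uminus = (lborel :: complex measure)"
proof -
  have "lborel = density (distr lborel borel (\<lambda>x::complex. 0 + (-1) *\<^sub>R x)) (\<lambda>_. \<bar>-1::real\<bar>^DIM(complex))"
    by (rule lborel_affine) simp
  then show ?thesis by (simp add: density_1)
qed

lemma lborel_complex_pair:
  "distr (lborel \<Otimes>\<^sub>M lborel) borel (\<lambda>(x,y). Complex x y) = (lborel :: complex measure)"
proof (rule lborel_eqI[symmetric])
  fix l u :: complex
  assume le: "\<And>b. b \<in> Basis \<Longrightarrow> l \<bullet> b \<le> u \<bullet> b"
  then have le1: "Re l \<le> Re u" and le2: "Im l \<le> Im u"
    using le[of 1] le[of \<i>] by (auto simp: inner_complex_def)
  have meas: "(\<lambda>(x,y). Complex x y) \<in> measurable (lborel \<Otimes>\<^sub>M lborel) (borel :: complex measure)"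
  proof -
    have "(\<lambda>(x,y). Complex x y) = (\<lambda>p. complex_of_real (fst p) + \<i> * complex_of_real (snd p))"
      by (auto simp: complex_eq_iff)
    then show ?thesis by simp
  qed
  have pre: "(\<lambda>(x,y). Complex x y) -` box l u \<inter> space (lborel \<Otimes>\<^sub>M lborel) = {Re l<..<Re u} \<times> {Im l<..<Im u}"
    by (auto simp: box_def Basis_complex_def inner_complex_def space_pair_measure)
  show "emeasure (distr (lborel \<Otimes>\<^sub>M lborel) borel (\<lambda>(x,y). Complex x y)) (box l u) = (\<Prod>b\<in>Basis. (u - l) \<bullet> b)"
    using meas le1 le2 by (simp add: emeasure_distr pre lborel.emeasure_pair_measure_Times Basis_complex_def inner_complex_def ennreal_mult)
next
  show "sets (distr (lborel \<Otimes>\<^sub>M lborel) borel (\<lambda>(x,y). Complex x y)) = sets (borel :: complex measure)" by simp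
qed



lemma nn_integral_even_split:
  fixes g :: "real \<Rightarrow> ennreal"
  assumes [measurable]: "g \<in> borel_measurable borel" and ev: "\<And>x. g (-x) = g x"
  shows "(\<integral>\<^sup>+x. g x \<partial>lborel) = 2 * (\<integral>\<^sup>+x. g x * indicator {0..} x \<partial>lborel)"
proof -
  have "(\<integral>\<^sup>+x. g x \<partial>lborel) = (\<integral>\<^sup>+x. g x * indicator {0..} x + g x * indicator {..<0} x \<partial>lborel)"
    by (intro nn_integral_cong) (auto split: split_indicator)
  also have "\<dots> = (\<integral>\<^sup>+x. g x * indicator {0..} x \<partial>lborel) + (\<integral>\<^sup>+x. g x * indicator {..<0} x \<partial>lborel)"
    by (rule nn_integral_add) auto
  also have "(\<integral>\<^sup>+x. g x * indicator {..<0} x \<partial>lborel) = (\<integral>\<^sup>+x. g (0 + (-1) * x) * indicator {..<0} (0 + (-1) * x) \<partial>lborel)"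
    using nn_integral_real_affine[where c="-1" and t=0 and f="\<lambda>x. g x * indicator {..<0} x"] by simp
  also have "\<dots> = (\<integral>\<^sup>+x. g x * indicator {0..} x \<partial>lborel)"
  proof (rule nn_integral_cong_AE)
    show "AE x in lborel. g (0 + (-1) * x) * indicator {..<0} (0 + (-1) * x) = g x * indicator {0..} x"
      using AE_lborel_singleton[of 0] by eventually_elim (auto simp: ev split: split_indicator)
  qed
  finally show ?thesis by (simp add: mult_2)
qed

lemma nn_integral_arctan:
  "(\<integral>\<^sup>+s. ennreal (1 / (1 + s\<^sup>2)) \<partial>lborel) = ennreal pi"
proof -
  have "(\<integral>\<^sup>+s. ennreal (1 / (1 + s\<^sup>2)) * indicator {0..} s \<partial>lborel) = ennreal (pi / 2 - arctan 0)"
  proof (rule nn_integral_FTC_atLeast)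
    show "((\<lambda>a. arctan a) \<longlongrightarrow> pi / 2) at_top" by (rule tendsto_arctan_at_top)
  qed (auto intro!: derivative_eq_intros simp: add_nonneg_eq_0_iff field_simps power2_eq_square)
  moreover have "ennreal pi = 2 * ennreal (pi / 2)"
    using ennreal_mult[of 2 "pi/2"] by simp
  ultimately show ?thesis
    by (subst nn_integral_even_split) (auto simp: ennreal_mult[symmetric])
qed

lemma polar_trick:
  fixes f :: "real \<Rightarrow> ennreal"
  assumes [measurable]: "f \<in> borel_measurable borel" and C: "0 \<le> C"
    and rad: "\<And>k. k > 0 \<Longrightarrow> (\<integral>\<^sup>+x. ennreal x * f (k * x\<^sup>2) * indicator {0..} x \<partial>lborel) = ennreal (C / k)"
  shows "(\<integral>\<^sup>+x. \<integral>\<^sup>+y. f (x\<^sup>2 + y\<^sup>2) \<partial>lborel \<partial>lborel) = ennreal (2 * pi * C)"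
proof -
  have "(\<integral>\<^sup>+x. \<integral>\<^sup>+y. f (x\<^sup>2 + y\<^sup>2) \<partial>lborel \<partial>lborel) = (\<integral>\<^sup>+x. \<integral>\<^sup>+s. ennreal \<bar>x\<bar> * f (x\<^sup>2 * (1 + s\<^sup>2)) \<partial>lborel \<partial>lborel)"
  proof (rule nn_integral_cong_AE)
    show "AE x in lborel. (\<integral>\<^sup>+y. f (x\<^sup>2 + y\<^sup>2) \<partial>lborel) = (\<integral>\<^sup>+s. ennreal \<bar>x\<bar> * f (x\<^sup>2 * (1 + s\<^sup>2)) \<partial>lborel)"
      using AE_lborel_singleton[of 0]
    proof eventually_elim
      case (elim x)
      then show ?case
        by (subst nn_integral_real_affine[where c=x and t=0])
           (auto simp: nn_integral_cmult power_mult_distrib algebra_simps)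
    qed
  qed
  also have "\<dots> = (\<integral>\<^sup>+s. \<integral>\<^sup>+x. ennreal \<bar>x\<bar> * f (x\<^sup>2 * (1 + s\<^sup>2)) \<partial>lborel \<partial>lborel)"
    by (rule lborel_pair.Fubini') measurable
  also have "\<dots> = (\<integral>\<^sup>+s. ennreal (2 * C) * ennreal (1 / (1 + s\<^sup>2)) \<partial>lborel)"
  proof (rule nn_integral_cong)
    fix s :: real
    have k: "1 + s\<^sup>2 > 0" by (simp add: add_pos_nonneg)
    have "(\<integral>\<^sup>+x. ennreal \<bar>x\<bar> * f (x\<^sup>2 * (1 + s\<^sup>2)) \<partial>lborel)
        = 2 * (\<integral>\<^sup>+x. ennreal \<bar>x\<bar> * f (x\<^sup>2 * (1 + s\<^sup>2)) * indicator {0..} x \<partial>lborel)"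
      by (rule nn_integral_even_split) auto
    also have "(\<integral>\<^sup>+x. ennreal \<bar>x\<bar> * f (x\<^sup>2 * (1 + s\<^sup>2)) * indicator {0..} x \<partial>lborel)
        = (\<integral>\<^sup>+x. ennreal x * f ((1 + s\<^sup>2) * x\<^sup>2) * indicator {0..} x \<partial>lborel)"
      by (intro nn_integral_cong) (auto simp: mult.commute split: split_indicator)
    also have "\<dots> = ennreal (C / (1 + s\<^sup>2))" by (rule rad[OF k])
    finally show "(\<integral>\<^sup>+x. ennreal \<bar>x\<bar> * f (x\<^sup>2 * (1 + s\<^sup>2)) \<partial>lborel) = ennreal (2 * C) * ennreal (1 / (1 + s\<^sup>2))"
      using C k by (simp add: ennreal_mult[symmetric] ennreal_numeral[symmetric] divide_nonneg_nonneg del: ennreal_numeral)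
  qed
  also have "\<dots> = ennreal (2 * C) * ennreal pi"
    by (simp add: nn_integral_cmult nn_integral_arctan)
  also have "\<dots> = ennreal (2 * pi * C)"
    using C by (simp add: ennreal_mult[symmetric] mult_ac)
  finally show ?thesis .
qed



lemma rad_a:
  fixes Rn k :: real assumes Rn: "0 < Rn" and k: "0 < k"
  shows "(\<integral>\<^sup>+x. ennreal x * ennreal (exp (- (k * x\<^sup>2) / Rn) / (pi * Rn)) * indicator {0..} x \<partial>lborel)
         = ennreal ((1 / (2 * pi)) / k)"
proof -
  have "(\<integral>\<^sup>+x. ennreal x * ennreal (exp (- (k * x\<^sup>2) / Rn) / (pi * Rn)) * indicator {0..} x \<partial>lborel)
      = (\<integral>\<^sup>+x. ennreal (x * exp (- (k * x\<^sup>2) / Rn) / (pi * Rn)) * indicator {0..} x \<partial>lborel)"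
    by (intro nn_integral_cong) (auto split: split_indicator simp: ennreal_mult'[symmetric])
  also have "\<dots> = ennreal (0 - (- exp (- (k * 0\<^sup>2) / Rn) / (2 * pi * k)))"
  proof (rule nn_integral_FTC_atLeast)
    show "((\<lambda>x. - exp (- (k * x\<^sup>2) / Rn) / (2 * pi * k)) \<longlongrightarrow> 0) at_top"
      using Rn k by real_asymp
    fix x :: real assume "0 \<le> x"
    then show "0 \<le> x * exp (- (k * x\<^sup>2) / Rn) / (pi * Rn)" using Rn by simp
    show "((\<lambda>x. - exp (- (k * x\<^sup>2) / Rn) / (2 * pi * k)) has_real_derivative x * exp (- (k * x\<^sup>2) / Rn) / (pi * Rn)) (at x)"
      using Rn k by (auto intro!: derivative_eq_intros simp: field_simps power2_eq_square)
  qed simp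
  also have "\<dots> = ennreal ((1 / (2 * pi)) / k)" by simp
  finally show ?thesis .
qed

lemma lim_aux: fixes Rn k \<theta> :: real assumes Rn: "0 < Rn" and k: "0 < k"
 shows "((\<lambda>x. - (k * x\<^sup>2 - \<theta> + Rn) * exp (- (k * x\<^sup>2) / Rn) / (2 * pi * k)) \<longlongrightarrow> 0) at_top"
proof -
  define f where "f = (\<lambda>t::real. Rn * (t * exp (- t)) + (Rn - \<theta>) * exp (- t))"
  have l1: "((\<lambda>t::real. t * exp (- t)) \<longlongrightarrow> 0) at_top" by real_asymp
  have l2: "((\<lambda>t::real. exp (- t)) \<longlongrightarrow> 0) at_top" by real_asymp
  have lt: "(f \<longlongrightarrow> Rn * 0 + (Rn - \<theta>) * 0) at_top"
    unfolding f_def by (intro tendsto_add tendsto_mult tendsto_const l1 l2)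
  have ft0: "filterlim (\<lambda>x::real. (k / Rn) * x\<^sup>2) at_top at_top"
    using Rn k by (intro filterlim_tendsto_pos_mult_at_top[OF tendsto_const] filterlim_pow_at_top filterlim_ident) auto
  have ft: "filterlim (\<lambda>x::real. k * x\<^sup>2 / Rn) at_top at_top"
    using ft0 by simp
  have "((\<lambda>x. f (k * x\<^sup>2 / Rn)) \<longlongrightarrow> 0) at_top"
    using filterlim_compose[OF lt ft] by simp
  then have "((\<lambda>x. - f (k * x\<^sup>2 / Rn) / (2 * pi * k)) \<longlongrightarrow> 0) at_top"
    by (intro tendsto_divide_zero) (auto dest: tendsto_minus)
  moreover have "\<And>x. - f (k * x\<^sup>2 / Rn) / (2 * pi * k) = - (k * x\<^sup>2 - \<theta> + Rn) * exp (- (k * x\<^sup>2) / Rn) / (2 * pi * k)"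
  proof -
    fix x :: real
    have "f (k * x\<^sup>2 / Rn) = (k * x\<^sup>2 - \<theta> + Rn) * exp (- (k * x\<^sup>2) / Rn)"
      using Rn unfolding f_def by (simp add: algebra_simps)
    then show "- f (k * x\<^sup>2 / Rn) / (2 * pi * k) = - (k * x\<^sup>2 - \<theta> + Rn) * exp (- (k * x\<^sup>2) / Rn) / (2 * pi * k)"
      by (simp only: minus_mult_left)
  qed
  ultimately show ?thesis by simp
qed

lemma rad_b:
  fixes Rn k \<theta> :: real assumes Rn: "0 < Rn" and k: "0 < k" and th: "0 < \<theta>"
  shows "(\<integral>\<^sup>+x. ennreal x * ennreal (indicator {\<theta><..} (k * x\<^sup>2) * (k * x\<^sup>2 - \<theta>) * (exp (- (k * x\<^sup>2) / Rn) / (pi * Rn))) * indicator {0..} x \<partial>lborel)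
         = ennreal ((Rn * exp (- \<theta> / Rn) / (2 * pi)) / k)"
proof -
  define a where "a = sqrt (\<theta> / k)"
  have a0: "0 \<le> a" using th k by (simp add: a_def)
  have ka: "k * a\<^sup>2 = \<theta>" using th k by (simp add: a_def)
  have iff: "\<theta> < k * x\<^sup>2 \<longleftrightarrow> a < x" if x: "0 \<le> x" for x :: real
  proof -
    have "\<theta> < k * x\<^sup>2 \<longleftrightarrow> k * a\<^sup>2 < k * x\<^sup>2" using ka by simp
    also have "\<dots> \<longleftrightarrow> a\<^sup>2 < x\<^sup>2" using k by simp
    also have "\<dots> \<longleftrightarrow> a < x" using a0 x pos2 power_less_imp_less_base power_strict_mono by blast
    finally show ?thesis .
  qed
  have pw: "ennreal x * ennreal (indicator {\<theta><..} (k * x\<^sup>2) * (k * x\<^sup>2 - \<theta>) * (exp (- (k * x\<^sup>2) / Rn) / (pi * Rn))) * indicator {0..} x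
        = ennreal (x * (k * x\<^sup>2 - \<theta>) * exp (- (k * x\<^sup>2) / Rn) / (pi * Rn)) * indicator {a..} x" for x :: real
  proof (cases "0 \<le> x")
    case x0: True
    show ?thesis
    proof (cases "a < x")
      case True
      then have t: "\<theta> < k * x\<^sup>2" using iff[OF x0] by simp
      have "ennreal x * ennreal ((k * x\<^sup>2 - \<theta>) * (exp (- (k * x\<^sup>2) / Rn) / (pi * Rn)))
          = ennreal (x * ((k * x\<^sup>2 - \<theta>) * (exp (- (k * x\<^sup>2) / Rn) / (pi * Rn))))"
        using x0 by (rule ennreal_mult'[symmetric])
      then show ?thesis using t True x0 by (simp add: indicator_def mult.assoc)
    next
      case False
      then have "x = a \<or> x < a" by auto
      then show ?thesis
      proof
        assume "x = a" then show ?thesis using ka a0 by (simp add: indicator_def)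
      next
        assume "x < a"
        then have "\<not> \<theta> < k * x\<^sup>2" using iff[OF x0] by simp
        then show ?thesis using \<open>x < a\<close> by (simp add: indicator_def)
      qed
    qed
  next
    case False
    then show ?thesis using a0 by (simp add: indicator_def)
  qed
  have "(\<integral>\<^sup>+x. ennreal x * ennreal (indicator {\<theta><..} (k * x\<^sup>2) * (k * x\<^sup>2 - \<theta>) * (exp (- (k * x\<^sup>2) / Rn) / (pi * Rn))) * indicator {0..} x \<partial>lborel)
      = (\<integral>\<^sup>+x. ennreal (x * (k * x\<^sup>2 - \<theta>) * exp (- (k * x\<^sup>2) / Rn) / (pi * Rn)) * indicator {a..} x \<partial>lborel)"
    by (intro nn_integral_cong pw)
  also have "\<dots> = ennreal (0 - (- (k * a\<^sup>2 - \<theta> + Rn) * exp (- (k * a\<^sup>2) / Rn) / (2 * pi * k)))"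
  proof (rule nn_integral_FTC_atLeast)
    show "((\<lambda>x. - (k * x\<^sup>2 - \<theta> + Rn) * exp (- (k * x\<^sup>2) / Rn) / (2 * pi * k)) \<longlongrightarrow> 0) at_top"
      using Rn k by (rule lim_aux)
    fix x :: real assume ax: "a \<le> x"
    then have x0: "0 \<le> x" using a0 by linarith
    have "\<theta> \<le> k * x\<^sup>2"
    proof (cases "a < x")
      case True then show ?thesis using iff[OF x0] by simp
    next
      case False then have "x = a" using ax by simp
      then show ?thesis using ka by simp
    qed
    then show "0 \<le> x * (k * x\<^sup>2 - \<theta>) * exp (- (k * x\<^sup>2) / Rn) / (pi * Rn)" using Rn x0 by simp
    show "((\<lambda>x. - (k * x\<^sup>2 - \<theta> + Rn) * exp (- (k * x\<^sup>2) / Rn) / (2 * pi * k)) has_real_derivative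
           x * (k * x\<^sup>2 - \<theta>) * exp (- (k * x\<^sup>2) / Rn) / (pi * Rn)) (at x)"
      using Rn k by (auto intro!: derivative_eq_intros simp: field_simps power2_eq_square)
  qed simp
  also have "\<dots> = ennreal ((Rn * exp (- \<theta> / Rn) / (2 * pi)) / k)"
  proof -
    have "0 - (- (k * a\<^sup>2 - \<theta> + Rn) * exp (- (k * a\<^sup>2) / Rn) / (2 * pi * k)) = Rn * exp (- \<theta> / Rn) / (2 * pi * k)"
      using ka by simp
    also have "\<dots> = (Rn * exp (- \<theta> / Rn) / (2 * pi)) / k" by simp
    finally show ?thesis by simp
  qed
  finally show ?thesis .
qed



definition pd :: "real \<Rightarrow> complex \<Rightarrow> real" where
  "pd Rn z = exp (- (cmod z)\<^sup>2 / Rn) / (pi * Rn)"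

definition phi1 :: "real \<Rightarrow> real \<Rightarrow> real" where
  "phi1 \<theta> y = indicator {\<theta><..} y * (y - \<theta>)"

lemma pd_measurable[measurable]: "pd Rn \<in> borel_measurable borel"
  unfolding pd_def by measurable

lemma phi1_measurable[measurable]: "phi1 \<theta> \<in> borel_measurable borel"
  unfolding phi1_def by measurable

lemma pd_nonneg: "0 < Rn \<Longrightarrow> 0 \<le> pd Rn z"
  by (simp add: pd_def)

lemma phi1_nonneg: "0 \<le> phi1 \<theta> y"
  by (simp add: phi1_def indicator_def)

lemma cscg_pd: "cscg Rn = density lborel (\<lambda>z. ennreal (pd Rn z))"
  by (simp add: cscg_def pd_def)

lemma nn_integral_complex:
  fixes h :: "complex \<Rightarrow> ennreal"
  assumes [measurable]: "h \<in> borel_measurable borel"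
  shows "(\<integral>\<^sup>+z. h z \<partial>lborel) = (\<integral>\<^sup>+x. \<integral>\<^sup>+y. h (Complex x y) \<partial>lborel \<partial>lborel)"
proof -
  have m: "(\<lambda>(x,y). Complex x y) \<in> measurable (lborel \<Otimes>\<^sub>M lborel) (borel :: complex measure)"
  proof -
    have "(\<lambda>(x,y). Complex x y) = (\<lambda>p. complex_of_real (fst p) + \<i> * complex_of_real (snd p))"
      by (auto simp: complex_eq_iff)
    then show ?thesis by simp
  qed
  have "(\<integral>\<^sup>+z. h z \<partial>lborel) = (\<integral>\<^sup>+z. h z \<partial>distr (lborel \<Otimes>\<^sub>M lborel) borel (\<lambda>(x,y). Complex x y))"
    by (simp add: lborel_complex_pair)
  also have "\<dots> = (\<integral>\<^sup>+p. h (case p of (x,y) \<Rightarrow> Complex x y) \<partial>(lborel \<Otimes>\<^sub>M lborel))"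
    by (rule nn_integral_distr[OF m]) simp
  also have "\<dots> = (\<integral>\<^sup>+x. \<integral>\<^sup>+y. h (Complex x y) \<partial>lborel \<partial>lborel)"
    by (subst lborel.nn_integral_fst[symmetric]) (use m in \<open>auto simp: case_prod_beta\<close>)
  finally show ?thesis .
qed

lemma cmod_Complex_sq: "(cmod (Complex x y))\<^sup>2 = x\<^sup>2 + y\<^sup>2"
  by (simp add: cmod_power2)

lemma cscg_prob:
  assumes Rn: "0 < Rn"
  shows "prob_space (cscg Rn)"
proof
  have "emeasure (cscg Rn) (space (cscg Rn)) = (\<integral>\<^sup>+z. ennreal (pd Rn z) \<partial>lborel)"
    by (simp add: cscg_pd emeasure_density)
  also have "\<dots> = (\<integral>\<^sup>+x. \<integral>\<^sup>+y. ennreal (exp (- (x\<^sup>2 + y\<^sup>2) / Rn) / (pi * Rn)) \<partial>lborel \<partial>lborel)"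
    by (subst nn_integral_complex) (auto simp: pd_def cmod_Complex_sq)
  also have "\<dots> = ennreal (2 * pi * (1 / (2 * pi)))"
    by (rule polar_trick[where f="\<lambda>u. ennreal (exp (- u / Rn) / (pi * Rn))"]) (use Rn rad_a in auto)
  also have "\<dots> = 1" by simp
  finally show "emeasure (cscg Rn) (space (cscg Rn)) = 1" .
qed

lemma nn_F0:
  assumes Rn: "0 < Rn" and th: "0 < \<theta>"
  shows "(\<integral>\<^sup>+z. ennreal (phi1 \<theta> ((cmod z)\<^sup>2)) \<partial>cscg Rn) = ennreal (Rn * exp (- \<theta> / Rn))"
proof -
  have "(\<integral>\<^sup>+z. ennreal (phi1 \<theta> ((cmod z)\<^sup>2)) \<partial>cscg Rn)
      = (\<integral>\<^sup>+z. ennreal (pd Rn z) * ennreal (phi1 \<theta> ((cmod z)\<^sup>2)) \<partial>lborel)"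
    by (simp add: cscg_pd nn_integral_density)
  also have "\<dots> = (\<integral>\<^sup>+z. ennreal (phi1 \<theta> ((cmod z)\<^sup>2) * pd Rn z) \<partial>lborel)"
    using Rn by (intro nn_integral_cong) (simp add: ennreal_mult[symmetric] phi1_nonneg pd_nonneg mult.commute)
  also have "\<dots> = (\<integral>\<^sup>+x. \<integral>\<^sup>+y. ennreal (indicator {\<theta><..} (x\<^sup>2 + y\<^sup>2) * (x\<^sup>2 + y\<^sup>2 - \<theta>) * (exp (- (x\<^sup>2 + y\<^sup>2) / Rn) / (pi * Rn))) \<partial>lborel \<partial>lborel)"
    by (subst nn_integral_complex) (auto simp: pd_def phi1_def cmod_Complex_sq)
  also have "\<dots> = ennreal (2 * pi * (Rn * exp (- \<theta> / Rn) / (2 * pi)))"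
    by (rule polar_trick[where f="\<lambda>u. ennreal (indicator {\<theta><..} u * (u - \<theta>) * (exp (- u / Rn) / (pi * Rn)))"])
       (use Rn th rad_b in auto)
  also have "\<dots> = ennreal (Rn * exp (- \<theta> / Rn))" by simp
  finally show ?thesis .
qed



lemma cnj_measurable[measurable]: "cnj \<in> borel_measurable borel"
  by (intro borel_measurable_continuous_onI continuous_intros)

lemma pd_le_iff:
  assumes Rn: "0 < Rn"
  shows "pd Rn u \<le> pd Rn v \<longleftrightarrow> (cmod v)\<^sup>2 \<le> (cmod u)\<^sup>2"
  using Rn by (simp add: pd_def divide_le_cancel) (meson less_asym mult_pos_pos pi_gt_zero)

lemma sq_diff_sign:
  fixes x a b :: real
  shows "(x - a)\<^sup>2 - (x - b)\<^sup>2 = (b - a) * (2 * x - a - b)"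
    and "x\<^sup>2 - (a + b - x)\<^sup>2 = (a + b) * (2 * x - a - b)"
  by (simp_all add: power2_eq_square algebra_simps)

lemma pointwise_SM:
  fixes a b :: real and w :: complex
  assumes Rn: "0 < Rn" and mono: "mono \<phi>" and ab: "0 \<le> a" "a \<le> b"
  shows "0 \<le> (pd Rn (w - of_real b) - pd Rn (w - of_real a)) *
              (\<phi> ((cmod w)\<^sup>2) - \<phi> ((cmod (of_real (a + b) - cnj w))\<^sup>2))"
proof -
  define x where "x = Re w"
  define y where "y = Im w"
  have e1: "(cmod w)\<^sup>2 = x\<^sup>2 + y\<^sup>2" by (simp add: cmod_power2 x_def y_def)
  have e2: "(cmod (of_real (a + b) - cnj w))\<^sup>2 = (a + b - x)\<^sup>2 + y\<^sup>2" by (simp add: cmod_power2 x_def y_def)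
  have e3: "(cmod (w - of_real a))\<^sup>2 = (x - a)\<^sup>2 + y\<^sup>2" by (simp add: cmod_power2 x_def y_def)
  have e4: "(cmod (w - of_real b))\<^sup>2 = (x - b)\<^sup>2 + y\<^sup>2" by (simp add: cmod_power2 x_def y_def)
  show ?thesis
  proof (cases "a + b \<le> 2 * x")
    case True
    have "0 \<le> (b - a) * (2 * x - a - b)" using True ab by simp
    then have "(x - b)\<^sup>2 \<le> (x - a)\<^sup>2" using sq_diff_sign(1)[of x a b] by linarith
    then have p: "pd Rn (w - of_real a) \<le> pd Rn (w - of_real b)"
      using pd_le_iff[OF Rn, of "w - of_real a" "w - of_real b"] e3 e4 by (simp only:)
    have "0 \<le> (a + b) * (2 * x - a - b)" using True ab by simp
    then have "(a + b - x)\<^sup>2 \<le> x\<^sup>2" using sq_diff_sign(2)[of x a b] by linarith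
    then have "\<phi> ((cmod (of_real (a + b) - cnj w))\<^sup>2) \<le> \<phi> ((cmod w)\<^sup>2)"
      using e1 e2 by (intro monoD[OF mono]) simp
    with p show ?thesis by simp
  next
    case False
    have "(b - a) * (2 * x - a - b) \<le> 0" using False ab by (intro mult_nonneg_nonpos) auto
    then have "(x - a)\<^sup>2 \<le> (x - b)\<^sup>2" using sq_diff_sign(1)[of x a b] by linarith
    then have p: "pd Rn (w - of_real b) \<le> pd Rn (w - of_real a)"
      using pd_le_iff[OF Rn, of "w - of_real b" "w - of_real a"] e3 e4 by (simp only:)
    have "(a + b) * (2 * x - a - b) \<le> 0" using False ab by (intro mult_nonneg_nonpos) auto
    then have "x\<^sup>2 \<le> (a + b - x)\<^sup>2" using sq_diff_sign(2)[of x a b] by linarith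
    then have "\<phi> ((cmod w)\<^sup>2) \<le> \<phi> ((cmod (of_real (a + b) - cnj w))\<^sup>2)"
      using e1 e2 by (intro monoD[OF mono]) simp
    with p show ?thesis by (intro mult_nonpos_nonpos) simp_all
  qed
qed

lemma pd_refl:
  "pd Rn (of_real (a + b) - cnj w - of_real b) = pd Rn (w - of_real a)"
  "pd Rn (of_real (a + b) - cnj w - of_real a) = pd Rn (w - of_real b)"
proof -
  have "(cmod (of_real (a + b) - cnj w - of_real b))\<^sup>2 = (cmod (w - of_real a))\<^sup>2"
    by (simp add: cmod_power2 power2_commute)
  then show "pd Rn (of_real (a + b) - cnj w - of_real b) = pd Rn (w - of_real a)"
    by (simp add: pd_def)
  have "(cmod (of_real (a + b) - cnj w - of_real a))\<^sup>2 = (cmod (w - of_real b))\<^sup>2"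
    by (simp add: cmod_power2 power2_commute)
  then show "pd Rn (of_real (a + b) - cnj w - of_real a) = pd Rn (w - of_real b)"
    by (simp add: pd_def)
qed

lemma shift_lborel:
  fixes \<phi> :: "real \<Rightarrow> real"
  assumes Rn: "0 < Rn" and [measurable]: "\<phi> \<in> borel_measurable borel"
    and int: "integrable (cscg Rn) (\<lambda>z. \<phi> ((cmod (complex_of_real c + z))\<^sup>2))"
  shows "integrable lborel (\<lambda>w. pd Rn (w - of_real c) * \<phi> ((cmod w)\<^sup>2))"
    and "(\<integral>z. \<phi> ((cmod (complex_of_real c + z))\<^sup>2) \<partial>cscg Rn) = (\<integral>w. pd Rn (w - of_real c) * \<phi> ((cmod w)\<^sup>2) \<partial>lborel)"
proof -
  have nn: "AE z in lborel. 0 \<le> pd Rn z" using Rn by (simp add: pd_nonneg)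
  have i1: "integrable lborel (\<lambda>z. pd Rn z * \<phi> ((cmod (complex_of_real c + z))\<^sup>2))"
    using int nn unfolding cscg_pd by (subst (asm) integrable_density) auto
  have e1: "(\<integral>z. \<phi> ((cmod (complex_of_real c + z))\<^sup>2) \<partial>cscg Rn) = (\<integral>z. pd Rn z * \<phi> ((cmod (complex_of_real c + z))\<^sup>2) \<partial>lborel)"
    using nn unfolding cscg_pd by (subst integral_density) auto
  define f where "f = (\<lambda>z. pd Rn z * \<phi> ((cmod (complex_of_real c + z))\<^sup>2))"
  have fm[measurable]: "f \<in> borel_measurable borel" unfolding f_def by measurable
  have D: "distr lborel borel ((+) (- complex_of_real c)) = lborel" by (rule lborel_distr_plus)
  have fe: "(\<lambda>w. f (w - complex_of_real c)) = (\<lambda>w. pd Rn (w - of_real c) * \<phi> ((cmod w)\<^sup>2))"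
    by (simp add: f_def)
  have "integrable (distr lborel borel ((+) (- complex_of_real c))) f"
    using i1 D by (simp add: f_def)
  then show "integrable lborel (\<lambda>w. pd Rn (w - of_real c) * \<phi> ((cmod w)\<^sup>2))"
    by (subst (asm) integrable_distr_eq) (auto simp: fe)
  have "(\<integral>z. f z \<partial>lborel) = (\<integral>z. f z \<partial>distr lborel borel ((+) (- complex_of_real c)))" using D by simp
  also have "\<dots> = (\<integral>w. f (- complex_of_real c + w) \<partial>lborel)"
    by (rule integral_distr) auto
  also have "\<dots> = (\<integral>w. f (w - complex_of_real c) \<partial>lborel)" by simp
  finally show "(\<integral>z. \<phi> ((cmod (complex_of_real c + z))\<^sup>2) \<partial>cscg Rn) = (\<integral>w. pd Rn (w - of_real c) * \<phi> ((cmod w)\<^sup>2) \<partial>lborel)"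
    using e1 fe f_def by metis
qed

lemma refl_lborel:
  fixes g :: "complex \<Rightarrow> real" and t :: complex
  assumes [measurable]: "g \<in> borel_measurable borel"
  shows "integrable lborel g \<longleftrightarrow> integrable lborel (\<lambda>w. g (t - cnj w))"
    and "(\<integral>w. g w \<partial>lborel) = (\<integral>w. g (t - cnj w) \<partial>lborel)"
proof -
  have D: "distr lborel borel (\<lambda>w. t - cnj w) = lborel" by (rule lborel_cnj_affine)
  have m: "(\<lambda>w. t - cnj w) \<in> measurable lborel borel" by measurable
  show "integrable lborel g \<longleftrightarrow> integrable lborel (\<lambda>w. g (t - cnj w))"
    using integrable_distr_eq[OF m, of g] D by simp
  show "(\<integral>w. g w \<partial>lborel) = (\<integral>w. g (t - cnj w) \<partial>lborel)"
    using integral_distr[OF m, of g] D by simp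
qed

lemma SM:
  fixes \<phi> :: "real \<Rightarrow> real"
  assumes Rn: "0 < Rn" and m\<phi>[measurable]: "\<phi> \<in> borel_measurable borel" and mono: "mono \<phi>"
    and int: "\<And>c::real. integrable (cscg Rn) (\<lambda>z. \<phi> ((cmod (complex_of_real c + z))\<^sup>2))"
    and ab: "0 \<le> a" "a \<le> b"
  shows "(\<integral>z. \<phi> ((cmod (complex_of_real a + z))\<^sup>2) \<partial>cscg Rn) \<le> (\<integral>z. \<phi> ((cmod (complex_of_real b + z))\<^sup>2) \<partial>cscg Rn)"
proof -
  define t where "t = complex_of_real (a + b)"
  define Ia where "Ia = (\<lambda>w. pd Rn (w - of_real a) * \<phi> ((cmod w)\<^sup>2))"
  define Ib where "Ib = (\<lambda>w. pd Rn (w - of_real b) * \<phi> ((cmod w)\<^sup>2))"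
  define Ja where "Ja = (\<lambda>w. pd Rn (w - of_real a) * \<phi> ((cmod (t - cnj w))\<^sup>2))"
  define Jb where "Jb = (\<lambda>w. pd Rn (w - of_real b) * \<phi> ((cmod (t - cnj w))\<^sup>2))"
  have mIa[measurable]: "Ia \<in> borel_measurable borel" unfolding Ia_def by measurable
  have mIb[measurable]: "Ib \<in> borel_measurable borel" unfolding Ib_def by measurable
  have iIa: "integrable lborel Ia" unfolding Ia_def by (rule shift_lborel(1)[OF Rn m\<phi> int[of a]])
  have eA: "(\<integral>z. \<phi> ((cmod (complex_of_real a + z))\<^sup>2) \<partial>cscg Rn) = integral\<^sup>L lborel Ia"
    unfolding Ia_def by (rule shift_lborel(2)[OF Rn m\<phi> int[of a]])
  have iIb: "integrable lborel Ib" unfolding Ib_def by (rule shift_lborel(1)[OF Rn m\<phi> int[of b]])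
  have eB: "(\<integral>z. \<phi> ((cmod (complex_of_real b + z))\<^sup>2) \<partial>cscg Rn) = integral\<^sup>L lborel Ib"
    unfolding Ib_def by (rule shift_lborel(2)[OF Rn m\<phi> int[of b]])
  have rIb: "(\<lambda>w. Ib (t - cnj w)) = Ja"
  proof
    fix w show "Ib (t - cnj w) = Ja w"
      unfolding Ib_def Ja_def t_def using pd_refl(1)[of Rn a b w] by (simp only:)
  qed
  have rIa: "(\<lambda>w. Ia (t - cnj w)) = Jb"
  proof
    fix w show "Ia (t - cnj w) = Jb w"
      unfolding Ia_def Jb_def t_def using pd_refl(2)[of Rn a b w] by (simp only:)
  qed
  have iJa: "integrable lborel Ja" using refl_lborel(1)[OF mIb, of t] iIb rIb by (simp only:)
  have iJb: "integrable lborel Jb" using refl_lborel(1)[OF mIa, of t] iIa rIa by (simp only:)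
  have eJa: "integral\<^sup>L lborel Ib = integral\<^sup>L lborel Ja" using refl_lborel(2)[OF mIb, of t] rIb by (simp only:)
  have eJb: "integral\<^sup>L lborel Ia = integral\<^sup>L lborel Jb" using refl_lborel(2)[OF mIa, of t] rIa by (simp only:)
  have "0 \<le> (\<integral>w. (Ib w - Ia w) + (Ja w - Jb w) \<partial>lborel)"
  proof (rule Bochner_Integration.integral_nonneg)
    fix w :: complex
    assume "w \<in> space lborel"
    have "(Ib w - Ia w) + (Ja w - Jb w) = (pd Rn (w - of_real b) - pd Rn (w - of_real a)) *
              (\<phi> ((cmod w)\<^sup>2) - \<phi> ((cmod (of_real (a + b) - cnj w))\<^sup>2))"
      unfolding Ia_def Ib_def Ja_def Jb_def t_def by (simp only: left_diff_distrib right_diff_distrib)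
    then show "0 \<le> (Ib w - Ia w) + (Ja w - Jb w)"
      using pointwise_SM[OF Rn mono ab, of w] by (simp only:)
  qed
  also have "\<dots> = (integral\<^sup>L lborel Ib - integral\<^sup>L lborel Ia) + (integral\<^sup>L lborel Ja - integral\<^sup>L lborel Jb)"
    using iIa iIb iJa iJb by (simp add: Bochner_Integration.integral_add Bochner_Integration.integral_diff)
  finally show ?thesis using eA eB eJa eJb by linarith
qed



definition FF :: "real \<Rightarrow> real \<Rightarrow> real \<Rightarrow> real" where
  "FF Rn \<theta> c = (\<integral>z. phi1 \<theta> ((cmod (complex_of_real c + z))\<^sup>2) \<partial>cscg Rn)"

context
  fixes Rn \<theta> :: real
  assumes Rn: "0 < Rn" and th: "0 < \<theta>"
begin

interpretation P: prob_space "cscg Rn" by (rule cscg_prob[OF Rn])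

lemma F0_hbi: "has_bochner_integral (cscg Rn) (\<lambda>z. phi1 \<theta> ((cmod z)\<^sup>2)) (Rn * exp (- \<theta> / Rn))"
proof (rule has_bochner_integral_nn_integral)
  show "(\<lambda>z. phi1 \<theta> ((cmod z)\<^sup>2)) \<in> borel_measurable (cscg Rn)" by (simp add: cscg_pd)
  show "AE z in cscg Rn. 0 \<le> phi1 \<theta> ((cmod z)\<^sup>2)" by (simp add: phi1_nonneg)
  show "0 \<le> Rn * exp (- \<theta> / Rn)" using Rn by simp
  show "(\<integral>\<^sup>+z. ennreal (phi1 \<theta> ((cmod z)\<^sup>2)) \<partial>cscg Rn) = ennreal (Rn * exp (- \<theta> / Rn))"
    by (rule nn_F0[OF Rn th])
qed

lemma sq_int: "integrable (cscg Rn) (\<lambda>z. (cmod z)\<^sup>2)"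
proof (rule Bochner_Integration.integrable_bound)
  show "integrable (cscg Rn) (\<lambda>z. phi1 \<theta> ((cmod z)\<^sup>2) + \<theta>)"
    using F0_hbi[unfolded has_bochner_integral_iff] by (intro Bochner_Integration.integrable_add) auto
  show "(\<lambda>z. (cmod z)\<^sup>2) \<in> borel_measurable (cscg Rn)" by (simp add: cscg_pd)
  show "AE z in cscg Rn. norm ((cmod z)\<^sup>2) \<le> norm (phi1 \<theta> ((cmod z)\<^sup>2) + \<theta>)"
    using th by (auto simp: phi1_def indicator_def)
qed

lemma shift_sq_int: "integrable (cscg Rn) (\<lambda>z. (cmod (complex_of_real c + z))\<^sup>2)"
proof (rule Bochner_Integration.integrable_bound)
  show "integrable (cscg Rn) (\<lambda>z. 2 * c\<^sup>2 + 2 * (cmod z)\<^sup>2)"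
    using sq_int by (intro Bochner_Integration.integrable_add) auto
  show "(\<lambda>z. (cmod (complex_of_real c + z))\<^sup>2) \<in> borel_measurable (cscg Rn)" by (simp add: cscg_pd)
  show "AE z in cscg Rn. norm ((cmod (complex_of_real c + z))\<^sup>2) \<le> norm (2 * c\<^sup>2 + 2 * (cmod z)\<^sup>2)"
  proof (rule AE_I2)
    fix z :: complex
    have "cmod (complex_of_real c + z) \<le> \<bar>c\<bar> + cmod z"
      using norm_triangle_ineq[of "complex_of_real c" z] by simp
    then have "(cmod (complex_of_real c + z))\<^sup>2 \<le> (\<bar>c\<bar> + cmod z)\<^sup>2"
      by (intro power_mono) auto
    also have "\<dots> \<le> 2 * c\<^sup>2 + 2 * (cmod z)\<^sup>2"
      using sum_squares_ge_zero[of "\<bar>c\<bar> - cmod z" 0]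
      by (simp add: power2_eq_square algebra_simps)
    finally show "norm ((cmod (complex_of_real c + z))\<^sup>2) \<le> norm (2 * c\<^sup>2 + 2 * (cmod z)\<^sup>2)" by simp
  qed
qed

lemma Re_int: "integrable (cscg Rn) (\<lambda>z. Re z)"
proof (rule Bochner_Integration.integrable_bound)
  show "integrable (cscg Rn) (\<lambda>z. 1 + (cmod z)\<^sup>2)"
    using sq_int by (intro Bochner_Integration.integrable_add) auto
  show "(\<lambda>z. Re z) \<in> borel_measurable (cscg Rn)" by (simp add: cscg_pd)
  show "AE z in cscg Rn. norm (Re z) \<le> norm (1 + (cmod z)\<^sup>2)"
  proof (rule AE_I2)
    fix z :: complex
    have "\<bar>Re z\<bar> \<le> cmod z" by (rule abs_Re_le_cmod)
    also have "cmod z \<le> 1 + (cmod z)\<^sup>2"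
    proof -
      have "2 * cmod z \<le> 1 + (cmod z)\<^sup>2"
        using sum_squares_ge_zero[of "cmod z - 1" 0] by (simp add: power2_eq_square algebra_simps)
      then show ?thesis using norm_ge_zero[of z] by linarith
    qed
    finally show "norm (Re z) \<le> norm (1 + (cmod z)\<^sup>2)" by simp
  qed
qed

lemma E_Re: "(\<integral>z. Re z \<partial>cscg Rn) = 0"
proof -
  have nn: "AE z in lborel. 0 \<le> pd Rn z" using Rn by (simp add: pd_nonneg)
  have e1: "(\<integral>z. Re z \<partial>cscg Rn) = (\<integral>z. pd Rn z * Re z \<partial>lborel)"
    using nn unfolding cscg_pd by (subst integral_density) auto
  have m: "uminus \<in> measurable (lborel :: complex measure) borel" by simp
  have "(\<integral>z. pd Rn z * Re z \<partial>lborel) = (\<integral>z. pd Rn z * Re z \<partial>distr lborel borel uminus)"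
    by (simp add: lborel_uminus_complex)
  also have "\<dots> = (\<integral>z. pd Rn (- z) * Re (- z) \<partial>lborel)"
    by (rule integral_distr[OF m]) simp
  also have "\<dots> = - (\<integral>z. pd Rn z * Re z \<partial>lborel)"
    by (simp add: pd_def)
  finally show ?thesis using e1 by simp
qed

lemma E_shift_sq: "(\<integral>z. (cmod (complex_of_real c + z))\<^sup>2 \<partial>cscg Rn) = c\<^sup>2 + (\<integral>z. (cmod z)\<^sup>2 \<partial>cscg Rn)"
proof -
  have eq: "\<And>z. (cmod (complex_of_real c + z))\<^sup>2 = c\<^sup>2 + (2 * c * Re z + (cmod z)\<^sup>2)"
    unfolding cmod_power2 by (simp add: power2_eq_square algebra_simps)
  have "(\<integral>z. (cmod (complex_of_real c + z))\<^sup>2 \<partial>cscg Rn) = (\<integral>z. c\<^sup>2 + (2 * c * Re z + (cmod z)\<^sup>2) \<partial>cscg Rn)"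
    by (simp only: eq)
  also have "\<dots> = c\<^sup>2 + (2 * c * (\<integral>z. Re z \<partial>cscg Rn) + (\<integral>z. (cmod z)\<^sup>2 \<partial>cscg Rn))"
    using Re_int sq_int P.prob_space
    by (simp add: Bochner_Integration.integral_add)
  finally show ?thesis by (simp add: E_Re)
qed

lemma phi1_int: "integrable (cscg Rn) (\<lambda>z. phi1 \<theta> ((cmod (complex_of_real c + z))\<^sup>2))"
proof (rule Bochner_Integration.integrable_bound)
  show "integrable (cscg Rn) (\<lambda>z. (cmod (complex_of_real c + z))\<^sup>2)" by (rule shift_sq_int)
  show "(\<lambda>z. phi1 \<theta> ((cmod (complex_of_real c + z))\<^sup>2)) \<in> borel_measurable (cscg Rn)" by (simp add: cscg_pd)
  show "AE z in cscg Rn. norm (phi1 \<theta> ((cmod (complex_of_real c + z))\<^sup>2)) \<le> norm ((cmod (complex_of_real c + z))\<^sup>2)"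
    using th by (auto simp: phi1_def indicator_def)
qed

lemma min_int: "integrable (cscg Rn) (\<lambda>z. min ((cmod (complex_of_real c + z))\<^sup>2) \<theta>)"
  by (rule P.integrable_const_bound[where B=\<theta>]) (use th in \<open>auto simp: cscg_pd\<close>)


lemma FF0: "FF Rn \<theta> 0 = Rn * exp (- \<theta> / Rn)"
  using F0_hbi unfolding FF_def by (simp add: has_bochner_integral_iff)

lemma FF_nonneg: "0 \<le> FF Rn \<theta> c"
  unfolding FF_def by (rule Bochner_Integration.integral_nonneg) (simp add: phi1_nonneg)

lemma phi1_mono: "mono (phi1 \<theta>)"
  by (rule monoI) (auto simp: phi1_def indicator_def)

lemma min_mono: "mono (\<lambda>y::real. min y \<theta>)"
  by (rule monoI) auto

lemma FF_mono: "0 \<le> a \<Longrightarrow> a \<le> b \<Longrightarrow> FF Rn \<theta> a \<le> FF Rn \<theta> b"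
  unfolding FF_def by (rule SM[OF Rn _ phi1_mono phi1_int]) auto

lemma FF_decomp: "FF Rn \<theta> c = c\<^sup>2 + (\<integral>z. (cmod z)\<^sup>2 \<partial>cscg Rn) - (\<integral>z. min ((cmod (complex_of_real c + z))\<^sup>2) \<theta> \<partial>cscg Rn)"
proof -
  have eq: "\<And>y. phi1 \<theta> y = y - min y \<theta>" by (auto simp: phi1_def indicator_def)
  have "FF Rn \<theta> c = (\<integral>z. (cmod (complex_of_real c + z))\<^sup>2 - min ((cmod (complex_of_real c + z))\<^sup>2) \<theta> \<partial>cscg Rn)"
    unfolding FF_def by (simp only: eq)
  also have "\<dots> = (\<integral>z. (cmod (complex_of_real c + z))\<^sup>2 \<partial>cscg Rn) - (\<integral>z. min ((cmod (complex_of_real c + z))\<^sup>2) \<theta> \<partial>cscg Rn)"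
    using shift_sq_int min_int by (rule Bochner_Integration.integral_diff)
  finally show ?thesis by (simp add: E_shift_sq)
qed

lemma FF_lip: "0 \<le> a \<Longrightarrow> a \<le> b \<Longrightarrow> FF Rn \<theta> b - FF Rn \<theta> a \<le> b\<^sup>2 - a\<^sup>2"
  using SM[OF Rn _ min_mono min_int, of a b] by (simp add: FF_decomp)

lemma FF_lower: "c\<^sup>2 - \<theta> \<le> FF Rn \<theta> c"
proof -
  have "(\<integral>z. (cmod (complex_of_real c + z))\<^sup>2 - \<theta> \<partial>cscg Rn) \<le> FF Rn \<theta> c"
    unfolding FF_def
    by (rule integral_mono) (use shift_sq_int phi1_int in \<open>auto simp: phi1_def indicator_def\<close>)
  moreover have "(\<integral>z. (cmod (complex_of_real c + z))\<^sup>2 - \<theta> \<partial>cscg Rn) = c\<^sup>2 + (\<integral>z. (cmod z)\<^sup>2 \<partial>cscg Rn) - \<theta>"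
    using shift_sq_int by (simp add: Bochner_Integration.integral_diff E_shift_sq P.prob_space)
  moreover have "0 \<le> (\<integral>z. (cmod z)\<^sup>2 \<partial>cscg Rn)" by simp
  ultimately show ?thesis by linarith
qed

end



lemma J0_FF:
  "J0 tau cr Rn \<theta> x = (1 - tau) * FF Rn \<theta> (sqrt (cr * x)) - \<theta> * tau"
proof -
  have m: "(\<lambda>z. (cmod (complex_of_real (sqrt (cr * x)) + z))\<^sup>2) \<in> measurable (cscg Rn) borel"
    by (simp add: cscg_pd)
  have "(LINT y:{\<theta><..}|G_law cr Rn x. (y - \<theta>)) = (\<integral>y. indicator {\<theta><..} y *\<^sub>R (y - \<theta>) \<partial>G_law cr Rn x)"
    by (simp add: set_lebesgue_integral_def)
  also have "\<dots> = (\<integral>z. indicator {\<theta><..} ((cmod (complex_of_real (sqrt (cr * x)) + z))\<^sup>2) *\<^sub>R ((cmod (complex_of_real (sqrt (cr * x)) + z))\<^sup>2 - \<theta>) \<partial>cscg Rn)"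
    unfolding G_law_def by (rule integral_distr[OF m]) simp
  also have "\<dots> = FF Rn \<theta> (sqrt (cr * x))"
    unfolding FF_def phi1_def by simp
  finally show ?thesis by (simp add: J0_def)
qed

theorem lemma2:
  fixes tau cr Rn \<theta> :: real
  assumes tau: "0 < tau" "tau < 1"
    and cr: "0 < cr" and Rn: "0 < Rn"
    and \<theta>: "0 < \<theta>"
  shows "mono_on {0..} (J0 tau cr Rn \<theta>)
       \<and> filterlim (J0 tau cr Rn \<theta>) at_top at_top
       \<and> (Rn / \<theta> * exp (- \<theta> / Rn) < tau / (1 - tau) \<longrightarrow>
            (\<exists>L. (J0 tau cr Rn \<theta> \<longlongrightarrow> L) (at_right 0) \<and> L < 0))
       \<and> (cr < 1 / (1 - tau) \<longrightarrow>
            antimono_on {0..} (q_fun tau cr Rn \<theta>)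
          \<and> (\<exists>L. (q_fun tau cr Rn \<theta> \<longlongrightarrow> L) (at_right 0) \<and> L > 0)
          \<and> filterlim (q_fun tau cr Rn \<theta>) at_bot at_top)"
proof -
  define F where "F = FF Rn \<theta>"
  define J where "J = J0 tau cr Rn \<theta>"
  define q where "q = q_fun tau cr Rn \<theta>"
  have Jx: "\<And>x. J x = (1 - tau) * F (sqrt (cr * x)) - \<theta> * tau"
    unfolding J_def F_def by (rule J0_FF)
  have qx: "\<And>x. q x = J x - x + \<theta>" unfolding q_def J_def by (simp add: q_fun_def)
  have t1: "0 < 1 - tau" using tau by simp
  have sq: "\<And>x. 0 \<le> x \<Longrightarrow> (sqrt (cr * x))\<^sup>2 = cr * x" using cr by simp
  have sq0: "\<And>x. 0 \<le> sqrt (cr * x) \<or> x < 0" using cr by auto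
  have Fm: "\<And>x y. 0 \<le> x \<Longrightarrow> x \<le> y \<Longrightarrow> F (sqrt (cr * x)) \<le> F (sqrt (cr * y))"
    unfolding F_def using cr by (intro FF_mono[OF Rn \<theta>]) auto
  have Fl: "\<And>x y. 0 \<le> x \<Longrightarrow> x \<le> y \<Longrightarrow> F (sqrt (cr * y)) - F (sqrt (cr * x)) \<le> cr * y - cr * x"
  proof -
    fix x y :: real assume xy: "0 \<le> x" "x \<le> y"
    have "F (sqrt (cr * y)) - F (sqrt (cr * x)) \<le> (sqrt (cr * y))\<^sup>2 - (sqrt (cr * x))\<^sup>2"
      unfolding F_def using cr xy by (intro FF_lip[OF Rn \<theta>]) auto
    also have "\<dots> = cr * y - cr * x" using xy sq by simp
    finally show "F (sqrt (cr * y)) - F (sqrt (cr * x)) \<le> cr * y - cr * x" .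
  qed
  have F0: "F 0 = Rn * exp (- \<theta> / Rn)" unfolding F_def by (rule FF0[OF Rn \<theta>])
  have Fnn: "\<And>c. 0 \<le> F c" unfolding F_def by (rule FF_nonneg[OF Rn \<theta>])
  define L where "L = (1 - tau) * F 0 - \<theta> * tau"
  have J0: "J 0 = L" by (simp add: Jx L_def)
  have Jlo: "\<And>x. 0 \<le> x \<Longrightarrow> L \<le> J x"
    using Fm[of 0] t1 by (simp add: Jx L_def)
  have Jhi: "\<And>x. 0 \<le> x \<Longrightarrow> J x \<le> L + (1 - tau) * cr * x"
  proof -
    fix x :: real assume x: "0 \<le> x"
    have "F (sqrt (cr * x)) - F 0 \<le> cr * x - cr * 0" using Fl[OF order.refl x] by simp
    then have "(1 - tau) * (F (sqrt (cr * x)) - F 0) \<le> (1 - tau) * (cr * x)"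
      using t1 by (intro mult_left_mono) auto
    then show "J x \<le> L + (1 - tau) * cr * x" by (simp add: Jx L_def algebra_simps)
  qed
  have lim_lin: "\<And>a b. ((\<lambda>x::real. a + b * x) \<longlongrightarrow> a) (at_right 0)"
  proof -
    fix a b :: real
    have "((\<lambda>x::real. a + b * x) \<longlongrightarrow> a + b * 0) (at_right 0)"
      by (intro tendsto_intros)
    then show "((\<lambda>x::real. a + b * x) \<longlongrightarrow> a) (at_right 0)" by simp
  qed
  have ev_pos: "eventually (\<lambda>x::real. 0 \<le> x) (at_right 0)"
    unfolding eventually_at_filter by (rule always_eventually) simp
  have JL: "(J \<longlongrightarrow> L) (at_right 0)"
  proof (rule tendsto_sandwich[where f="\<lambda>_. L" and h="\<lambda>x. L + ((1 - tau) * cr) * x"])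
    show "eventually (\<lambda>x. L \<le> J x) (at_right 0)" using ev_pos by (rule eventually_mono) (rule Jlo)
    show "eventually (\<lambda>x. J x \<le> L + ((1 - tau) * cr) * x) (at_right 0)"
      using ev_pos by (rule eventually_mono) (use Jhi in simp)
  qed (auto intro: lim_lin)
  have P1: "mono_on {0..} J"
  proof (rule mono_onI)
    fix x y :: real assume "x \<in> {0..}" "y \<in> {0..}" "x \<le> y"
    then show "J x \<le> J y" using Fm[of x y] t1 by (simp add: Jx mult_left_mono)
  qed
  have P2: "filterlim J at_top at_top"
  proof (rule filterlim_at_top_mono)
    show "filterlim (\<lambda>x. (- \<theta> * (1 - tau) - \<theta> * tau) + ((1 - tau) * cr) * x) at_top at_top"
      using t1 cr
      by (intro filterlim_tendsto_add_at_top[OF tendsto_const]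
                filterlim_tendsto_pos_mult_at_top[OF tendsto_const _ filterlim_ident]) simp
    show "eventually (\<lambda>x. (- \<theta> * (1 - tau) - \<theta> * tau) + ((1 - tau) * cr) * x \<le> J x) at_top"
      using eventually_ge_at_top[of "0::real"]
    proof (rule eventually_mono)
      fix x :: real assume x: "0 \<le> x"
      have "(sqrt (cr * x))\<^sup>2 - \<theta> \<le> F (sqrt (cr * x))" unfolding F_def by (rule FF_lower[OF Rn \<theta>])
      then have "cr * x - \<theta> \<le> F (sqrt (cr * x))" using sq[OF x] by simp
      then have "(1 - tau) * (cr * x - \<theta>) \<le> (1 - tau) * F (sqrt (cr * x))"
        using t1 by (intro mult_left_mono) auto
      then show "(- \<theta> * (1 - tau) - \<theta> * tau) + ((1 - tau) * cr) * x \<le> J x"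
        by (simp add: Jx algebra_simps)
    qed
  qed
  have P3: "Rn / \<theta> * exp (- \<theta> / Rn) < tau / (1 - tau) \<longrightarrow> (\<exists>L. (J \<longlongrightarrow> L) (at_right 0) \<and> L < 0)"
  proof
    assume h: "Rn / \<theta> * exp (- \<theta> / Rn) < tau / (1 - tau)"
    define E where "E = Rn * exp (- \<theta> / Rn)"
    have "E / \<theta> < tau / (1 - tau)" using h by (simp add: E_def)
    then have "E < tau / (1 - tau) * \<theta>" using \<theta> by (simp add: pos_divide_less_eq)
    also have "tau / (1 - tau) * \<theta> = (tau * \<theta>) / (1 - tau)" by simp
    finally have "E * (1 - tau) < tau * \<theta>" using t1 by (simp add: pos_less_divide_eq)
    then have "(1 - tau) * (Rn * exp (- \<theta> / Rn)) < \<theta> * tau" by (simp add: E_def mult.commute)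
    then have "L < 0" by (simp add: L_def F0)
    then show "\<exists>L. (J \<longlongrightarrow> L) (at_right 0) \<and> L < 0" using JL by blast
  qed
  have P4: "cr < 1 / (1 - tau) \<longrightarrow> antimono_on {0..} q \<and> (\<exists>L. (q \<longlongrightarrow> L) (at_right 0) \<and> L > 0)
          \<and> filterlim q at_bot at_top"
  proof
    assume h: "cr < 1 / (1 - tau)"
    have k: "(1 - tau) * cr < 1" using h t1 by (simp add: field_simps)
    have A: "antimono_on {0..} q"
    proof (rule monotone_onI)
      fix x y :: real assume xy: "x \<in> {0..}" "y \<in> {0..}" "x \<le> y"
      then have "F (sqrt (cr * y)) - F (sqrt (cr * x)) \<le> cr * y - cr * x" using Fl by simp
      then have "(1 - tau) * (F (sqrt (cr * y)) - F (sqrt (cr * x))) \<le> (1 - tau) * (cr * (y - x))"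
        using t1 by (intro mult_left_mono) (auto simp: algebra_simps)
      also have "\<dots> = ((1 - tau) * cr) * (y - x)" by simp
      also have "\<dots> \<le> 1 * (y - x)" using k xy by (intro mult_right_mono) auto
      finally show "q y \<le> q x" by (simp add: qx Jx algebra_simps)
    qed
    have B: "(q \<longlongrightarrow> L + \<theta>) (at_right 0)"
    proof -
      have "((\<lambda>x. J x + (\<theta> + (- 1) * x)) \<longlongrightarrow> L + \<theta>) (at_right 0)"
        using JL lim_lin[of \<theta> "-1"] by (rule tendsto_add)
      then show ?thesis by (simp add: qx[abs_def] algebra_simps)
    qed
    have Lp: "L + \<theta> > 0"
    proof -
      have a1: "\<theta> * tau < \<theta> * 1" using \<theta> tau by (intro mult_strict_left_mono) auto
      have a2: "tau * F 0 \<le> 1 * F 0" using Fnn[of 0] tau by (intro mult_right_mono) auto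
      show ?thesis using a1 a2 unfolding L_def by (simp add: algebra_simps)
    qed
    have C: "filterlim q at_bot at_top"
    proof (subst filterlim_at_bot, intro allI)
      fix Z :: real
      have f: "filterlim (\<lambda>x. (L + \<theta>) + ((1 - tau) * cr - 1) * x) at_bot at_top"
      proof -
        have "filterlim (\<lambda>x. ((1 - tau) * cr - 1) * x) at_bot at_top"
          using k by (intro filterlim_tendsto_neg_mult_at_bot[OF tendsto_const _ filterlim_ident]) simp
        then show ?thesis
          by (subst filterlim_tendsto_add_at_bot_iff[OF tendsto_const])
      qed
      have "eventually (\<lambda>x. (L + \<theta>) + ((1 - tau) * cr - 1) * x \<le> Z) at_top"
        using f by (simp add: filterlim_at_bot)
      moreover have "eventually (\<lambda>x. q x \<le> (L + \<theta>) + ((1 - tau) * cr - 1) * x) at_top"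
        using eventually_ge_at_top[of "0::real"]
      proof (rule eventually_mono)
        fix x :: real assume "0 \<le> x"
        then show "q x \<le> (L + \<theta>) + ((1 - tau) * cr - 1) * x"
          using Jhi[of x] by (simp add: qx algebra_simps)
      qed
      ultimately show "eventually (\<lambda>x. q x \<le> Z) at_top"
        by eventually_elim simp
    qed
    show "antimono_on {0..} q \<and> (\<exists>L. (q \<longlongrightarrow> L) (at_right 0) \<and> L > 0) \<and> filterlim q at_bot at_top"
      using A B Lp C by blast
  qed
  show ?thesis using P1 P2 P3 P4 unfolding J_def q_def by blast
qed

end
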